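(* Let $\mathbf{F}\in[L^2(\mathbb{R}^2)]^2$ be supported in the bounded domain $\Omega$. Let $\tau_1\in\mathbb{C}\setminus\{0\}$, let $\mathbf{z}_0\neq\mathbf{z}_1$ be two points in $\mathbb{R}^2\setminus\overline{\Omega}$, and fix $\mathbf{q}\in\mathbb{S}$. Then $\mathbf{F}$ is uniquely determined (among sources supported in $\Omega$) by the two phaseless data sets $$\mathcal{B}_p=\{|u^\infty_{\mathbf{F}\cup\{\mathbf{z}\},p}(\hat{\mathbf{x}},\mathbf{q},\omega,\tau)|:\ \hat{\mathbf{x}}\in\mathbb{S}_{\mathbf{q}},\ \omega\in\mathbb{W},\ \tau\in\{0,\tau_1\},\ \mathbf{z}\in\{\mathbf{z}_0,\mathbf{z}_1\}\}$$ and $$\mathcal{B}_s=\{|u^\infty_{\mathbf{F}\cup\{\mathbf{z}\},s}(\hat{\mathbf{x}},\mathbf{q},\omega,\tau)|:\ \hat{\mathbf{x}}\in\mathbb{S}^\perp_{\mathbf{q}},\ \omega\in\mathbb{W},\ \tau\in\{0,\tau_1\},\ \mathbf{z}\in\{\mathbf{z}_0,\mathbf{z}_1\}\}.$$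
   Context: $\mathbb{W}=(\omega_{min},\omega_{max})$, $0<\omega_{min}<\omega_{max}$; Lamé constants $\mu>0$, $2\mu+\lambda>0$; $k_p=\omega/\sqrt{\lambda+2\mu}$, $k_s=\omega/\sqrt\mu$. $\mathbb{S}$ is the unit circle; $\hat{\mathbf{x}}^\perp$ is $\hat{\mathbf{x}}$ rotated anticlockwise by $\pi/2$. $\mathbb{S}_{\mathbf{q}}=\{\hat{\mathbf{x}}\in\mathbb{S}:\mathbf{q}\cdot\hat{\mathbf{x}}\ge 1/2\}$, $\mathbb{S}^\perp_{\mathbf{q}}=\{\hat{\mathbf{x}}\in\mathbb{S}:\mathbf{q}\cdot\hat{\mathbf{x}}^\perp\ge 1/2\}$. Source far fields: $u^\infty_{\mathbf{F},p}(\hat{\mathbf{x}},\omega)=\int_{\mathbb{R}^2}e^{-ik_p\hat{\mathbf{x}}\cdot\mathbf{y}}\hat{\mathbf{x}}\cdot\mathbf{F}(\mathbf{y})d\mathbf{y}$, $u^\infty_{\mathbf{F},s}(\hat{\mathbf{x}},\omega)=\int_{\mathbb{R}^2}e^{-ik_s\hat{\mathbf{x}}\cdot\mathbf{y}}\hat{\mathbf{x}}^\perp\cdot\mathbf{F}(\mathbf{y})d\mathbf{y}$. With an added point source at $\mathbf{z}$ of strength $\tau$ and polarization $\mathbf{q}$, the far fields are $u^\infty_{\mathbf{F}\cup\{\mathbf{z}\},p}(\hat{\mathbf{x}},\mathbf{q},\omega,\tau)=u^\infty_{\mathbf{F},p}(\hat{\mathbf{x}},\omega)+\tau e^{-ik_p\hat{\mathbf{x}}\cdot\mathbf{z}}\,\mathbf{q}\cdot\hat{\mathbf{x}}$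 and $u^\infty_{\mathbf{F}\cup\{\mathbf{z}\},s}(\hat{\mathbf{x}},\mathbf{q},\omega,\tau)=u^\infty_{\mathbf{F},s}(\hat{\mathbf{x}},\omega)+\tau e^{-ik_s\hat{\mathbf{x}}\cdot\mathbf{z}}\,\mathbf{q}\cdot\hat{\mathbf{x}}^\perp$. *)

theory Defs
  imports "HOL-Analysis.Analysis"
begin

definition perp2 :: "real^2 \<Rightarrow> real^2" where
  "perp2 x = vector [- (x$2), x$1]"

definition cdot :: "real^2 \<Rightarrow> complex^2 \<Rightarrow> complex" where
  "cdot x v = of_real (x$1) * v$1 + of_real (x$2) * v$2"

definition unit_circle :: "(real^2) set" where
  "unit_circle = {x. norm x = 1}"

definition S_q :: "real^2 \<Rightarrow> (real^2) set" where
  "S_q q = {x \<in> unit_circle. q \<bullet> x \<ge> 1/2}"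

definition S_q_perp :: "real^2 \<Rightarrow> (real^2) set" where
  "S_q_perp q = {x \<in> unit_circle. q \<bullet> perp2 x \<ge> 1/2}"

definition k_p :: "real \<Rightarrow> real \<Rightarrow> real \<Rightarrow> real" where
  "k_p lam mu \<omega> = \<omega> / sqrt (lam + 2 * mu)"

definition k_s :: "real \<Rightarrow> real \<Rightarrow> real" where
  "k_s mu \<omega> = \<omega> / sqrt mu"

definition farfield_p :: "real \<Rightarrow> real \<Rightarrow> (real^2 \<Rightarrow> complex^2) \<Rightarrow> real^2 \<Rightarrow> real \<Rightarrow> complex" where
  "farfield_p lam mu F xh \<omega> =
     (LINT y|lborel. cis (- k_p lam mu \<omega> * (xh \<bullet> y)) * cdot xh (F y))"

definition farfield_s :: "real \<Rightarrow> (real^2 \<Rightarrow> complex^2) \<Rightarrow> real^2 \<Rightarrow> real \<Rightarrow> complex" where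
  "farfield_s mu F xh \<omega> =
     (LINT y|lborel. cis (- k_s mu \<omega> * (xh \<bullet> y)) * cdot (perp2 xh) (F y))"

text \<open>Far fields with an added point source at z of strength tau and polarization q.\<close>

definition farfield_pt_p :: "real \<Rightarrow> real \<Rightarrow> (real^2 \<Rightarrow> complex^2) \<Rightarrow> real^2 \<Rightarrow>
    real^2 \<Rightarrow> real^2 \<Rightarrow> real \<Rightarrow> complex \<Rightarrow> complex" where
  "farfield_pt_p lam mu F z xh q \<omega> \<tau> =
     farfield_p lam mu F xh \<omega> + \<tau> * cis (- k_p lam mu \<omega> * (xh \<bullet> z)) * of_real (q \<bullet> xh)"

definition farfield_pt_s :: "real \<Rightarrow> (real^2 \<Rightarrow> complex^2) \<Rightarrow> real^2 \<Rightarrow>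
    real^2 \<Rightarrow> real^2 \<Rightarrow> real \<Rightarrow> complex \<Rightarrow> complex" where
  "farfield_pt_s mu F z xh q \<omega> \<tau> =
     farfield_s mu F xh \<omega> + \<tau> * cis (- k_s mu \<omega> * (xh \<bullet> z)) * of_real (q \<bullet> perp2 xh)"

definition L2_source_in :: "(real^2) set \<Rightarrow> (real^2 \<Rightarrow> complex^2) \<Rightarrow> bool" where
  "L2_source_in \<Omega> F \<longleftrightarrow>
     (\<forall>j. (\<lambda>y. F y $ j) \<in> borel_measurable lborel \<and>
          integrable lborel (\<lambda>y. (norm (F y $ j))^2)) \<and>
     (\<forall>y. y \<notin> \<Omega> \<longrightarrow> F y = 0)"

definition bounded_domain :: "(real^2) set \<Rightarrow> bool" where
  "bounded_domain \<Omega> \<longleftrightarrow> open \<Omega> \<and> connected \<Omega> \<and> bounded \<Omega> \<and> \<Omega> \<noteq> {}"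

end

theory Submission
  imports Defs "HOL-Complex_Analysis.Complex_Analysis"
begin

lemma deriv_integral:
  fixes f f' :: "complex \<Rightarrow> 'a \<Rightarrow> complex" and g :: "'a \<Rightarrow> real"
  assumes der: "\<And>w y. ((\<lambda>w. f w y) has_field_derivative f' w y) (at w)"
    and meas: "\<And>w. f w \<in> borel_measurable M"
    and meas': "\<And>w. f' w \<in> borel_measurable M"
    and g: "integrable M g"
    and bnd: "\<And>w y. w \<in> ball w0 r \<Longrightarrow> norm (f' w y) \<le> g y"
    and r: "r > 0"
    and int0: "integrable M (f w0)"
  shows "((\<lambda>w. integral\<^sup>L M (f w)) has_field_derivative integral\<^sup>L M (f' w0)) (at w0)"
proof -
  have lip: "norm (f w y - f w0 y) \<le> g y * norm (w - w0)" if "w \<in> ball w0 r" for w y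
  proof -
    have "norm (f w y - f w0 y) \<le> g y * norm (w - w0)"
      by (rule field_differentiable_bound[where S="ball w0 r" and f="\<lambda>w. f w y" and f'="\<lambda>w. f' w y"])
         (use that r bnd der in \<open>auto intro: has_field_derivative_at_within\<close>)
    then show ?thesis .
  qed
  have intw: "integrable M (f w)" if "w \<in> ball w0 r" for w
  proof -
    have "integrable M (\<lambda>y. f w0 y + (f w y - f w0 y))"
    proof (rule Bochner_Integration.integrable_add[OF int0])
      show "integrable M (\<lambda>y. f w y - f w0 y)"
        apply (rule Bochner_Integration.integrable_bound[where f="\<lambda>y. g y * norm (w - w0)"])
        using g meas that by (auto intro!: AE_I2 order_trans[OF lip] abs_ge_self)
    qed
    then show ?thesis by simp
  qed
  show ?thesis
    unfolding has_field_derivative_iff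
  proof (subst tendsto_at_iff_sequentially, intro allI impI, unfold comp_def)
    fix X :: "nat \<Rightarrow> complex"
    assume X: "\<forall>i. X i \<in> UNIV - {w0}" and Xl: "X \<longlonglongrightarrow> w0"
    from Xl r obtain N where N: "\<And>n. n \<ge> N \<Longrightarrow> dist (X n) w0 < r"
      unfolding lim_sequentially by blast
    define Y where "Y n = X (n + N)" for n
    have Yb: "Y n \<in> ball w0 r" for n using N[of "n+N"] by (simp add: Y_def dist_commute)
    have Yn: "Y n \<noteq> w0" for n using X by (auto simp: Y_def)
    have Yl: "Y \<longlonglongrightarrow> w0" unfolding Y_def by (rule LIMSEQ_ignore_initial_segment[OF Xl])
    have "(\<lambda>n. integral\<^sup>L M (\<lambda>y. (f (Y n) y - f w0 y) / (Y n - w0))) \<longlonglongrightarrow> integral\<^sup>L M (f' w0)"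
    proof (rule integral_dominated_convergence[where w=g])
      show "f' w0 \<in> borel_measurable M" by (rule meas')
      show "(\<lambda>y. (f (Y n) y - f w0 y) / (Y n - w0)) \<in> borel_measurable M" for n
        using meas by measurable
      show "integrable M g" by fact
      show "AE y in M. (\<lambda>n. (f (Y n) y - f w0 y) / (Y n - w0)) \<longlonglongrightarrow> f' w0 y"
      proof (rule AE_I2)
        fix y
        have "((\<lambda>w. (f w y - f w0 y) / (w - w0)) \<longlongrightarrow> f' w0 y) (at w0)"
          using der[of y w0] unfolding has_field_derivative_iff .
        then show "(\<lambda>n. (f (Y n) y - f w0 y) / (Y n - w0)) \<longlonglongrightarrow> f' w0 y"
          using Yl Yn unfolding tendsto_at_iff_sequentially comp_def by auto
      qed
      show "AE y in M. norm ((f (Y n) y - f w0 y) / (Y n - w0)) \<le> g y" for n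
      proof (rule AE_I2)
        fix y
        have "norm (f (Y n) y - f w0 y) \<le> g y * norm (Y n - w0)" using lip Yb by blast
        then show "norm ((f (Y n) y - f w0 y) / (Y n - w0)) \<le> g y"
          using Yn by (simp add: norm_divide divide_le_eq)
      qed
    qed
    moreover have eqq: "integral\<^sup>L M (\<lambda>y. (f (Y n) y - f w0 y) / (Y n - w0)) =
        (integral\<^sup>L M (f (Y n)) - integral\<^sup>L M (f w0)) / (Y n - w0)" for n
      using intw[OF Yb[of n]] int0 Yn[of n] by (simp add: integral_diff)
    ultimately have "(\<lambda>n. (integral\<^sup>L M (f (Y n)) - integral\<^sup>L M (f w0)) / (Y n - w0)) \<longlonglongrightarrow> integral\<^sup>L M (f' w0)"
      by (simp only: eqq)
    then show "(\<lambda>n. (integral\<^sup>L M (f (X n)) - integral\<^sup>L M (f w0)) / (X n - w0)) \<longlonglongrightarrow> integral\<^sup>L M (f' w0)"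
      unfolding Y_def by (rule LIMSEQ_offset)
  qed
qed

lemma moments_from_interval:
  fixes a :: "'a \<Rightarrow> real" and h :: "'a \<Rightarrow> complex"
  assumes h: "integrable M h" and am: "a \<in> borel_measurable M"
    and C0: "C \<ge> 0" and C: "\<And>y. h y \<noteq> 0 \<Longrightarrow> \<bar>a y\<bar> \<le> C"
    and eps: "\<epsilon> > 0"
    and zero: "\<And>t. t \<in> {t0-\<epsilon><..<t0+\<epsilon>} \<Longrightarrow>
        (\<integral>y. exp (- \<i> * of_real t * of_real (a y)) * h y \<partial>M) = 0"
  shows "(\<integral>y. of_real (a y ^ n) * h y \<partial>M) = 0"
proof -
  define \<Phi> where "\<Phi> n w = (\<integral>y. (- \<i> * of_real (a y)) ^ n * exp (- \<i> * w * of_real (a y)) * h y \<partial>M)"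
    for n w
  have hm: "h \<in> borel_measurable M" using h by auto
  have D: "(\<Phi> n has_field_derivative \<Phi> (Suc n) w) (at w)" for n w
    unfolding \<Phi>_def
  proof (rule deriv_integral[where r=1 and g="\<lambda>y. C ^ Suc n * exp ((norm w + 1) * C) * norm (h y)"])
    show "((\<lambda>w. (- \<i> * of_real (a y)) ^ n * exp (- \<i> * w * of_real (a y)) * h y) has_field_derivative
        (- \<i> * of_real (a y)) ^ Suc n * exp (- \<i> * w' * of_real (a y)) * h y) (at w')" for w' y
      by (auto intro!: derivative_eq_intros simp: algebra_simps)
    show "(\<lambda>y. (- \<i> * of_real (a y)) ^ n * exp (- \<i> * w' * of_real (a y)) * h y) \<in> borel_measurable M" for w' n
      using am hm by measurable
    then show "(\<lambda>y. (- \<i> * of_real (a y)) ^ Suc n * exp (- \<i> * w' * of_real (a y)) * h y) \<in> borel_measurable M" for w'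
      by blast
    show "integrable M (\<lambda>y. C ^ Suc n * exp ((norm w + 1) * C) * norm (h y))"
      using h by auto
    show "(0::real) < 1" by simp
    show "norm ((- \<i> * of_real (a y)) ^ Suc n * exp (- \<i> * w' * of_real (a y)) * h y)
        \<le> C ^ Suc n * exp ((norm w + 1) * C) * norm (h y)" if "w' \<in> ball w 1" for w' y
    proof (cases "h y = 0")
      case True then show ?thesis by simp
    next
      case False
      have ay: "\<bar>a y\<bar> \<le> C" using C False by blast
      have w': "norm w' \<le> norm w + 1" using that norm_triangle_sub[of w' w]
        by (auto simp: dist_norm norm_minus_commute)
      have "Re (- \<i> * w' * of_real (a y)) = Im w' * a y" by simp
      also have "\<dots> \<le> \<bar>Im w'\<bar> * \<bar>a y\<bar>" by (metis abs_ge_self abs_mult)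
      also have "\<dots> \<le> (norm w + 1) * C"
        by (rule mult_mono) (use abs_Im_le_cmod[of w'] w' ay C0 in auto)
      finally have e: "norm (exp (- \<i> * w' * of_real (a y))) \<le> exp ((norm w + 1) * C)"
        by (simp add: norm_exp)
      have p: "norm ((- \<i> * of_real (a y)) ^ Suc n) \<le> C ^ Suc n"
        by (simp add: norm_power norm_mult power_mono ay del: power_Suc)
      show ?thesis unfolding norm_mult
        by (intro mult_mono p e) (auto simp: C0)
    qed
    show "integrable M (\<lambda>y. (- \<i> * of_real (a y)) ^ n * exp (- \<i> * w * of_real (a y)) * h y)"
    proof (rule Bochner_Integration.integrable_bound[where f="\<lambda>y. C ^ n * exp (norm w * C) * norm (h y)"])
      show "integrable M (\<lambda>y. C ^ n * exp (norm w * C) * norm (h y))" using h by auto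
      show "(\<lambda>y. (- \<i> * of_real (a y)) ^ n * exp (- \<i> * w * of_real (a y)) * h y) \<in> borel_measurable M"
        using am hm by measurable
      show "AE y in M. norm ((- \<i> * of_real (a y)) ^ n * exp (- \<i> * w * of_real (a y)) * h y)
          \<le> norm (C ^ n * exp (norm w * C) * norm (h y))"
      proof (rule AE_I2)
        fix y show "norm ((- \<i> * of_real (a y)) ^ n * exp (- \<i> * w * of_real (a y)) * h y)
          \<le> norm (C ^ n * exp (norm w * C) * norm (h y))"
        proof (cases "h y = 0")
          case True then show ?thesis by simp
        next
          case False
          have ay: "\<bar>a y\<bar> \<le> C" using C False by blast
          have "Re (- \<i> * w * of_real (a y)) = Im w * a y" by simp
          also have "\<dots> \<le> \<bar>Im w\<bar> * \<bar>a y\<bar>" by (metis abs_ge_self abs_mult)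
          also have "\<dots> \<le> norm w * C"
            by (rule mult_mono) (use abs_Im_le_cmod[of w] ay C0 in auto)
          finally have e: "norm (exp (- \<i> * w * of_real (a y))) \<le> exp (norm w * C)"
            by (simp add: norm_exp)
          have p: "norm ((- \<i> * of_real (a y)) ^ n) \<le> C ^ n"
            by (simp add: norm_power norm_mult power_mono ay)
          have "norm ((- \<i> * of_real (a y)) ^ n * exp (- \<i> * w * of_real (a y)) * h y)
              \<le> C ^ n * exp (norm w * C) * norm (h y)" unfolding norm_mult
            by (intro mult_mono p e) (auto simp: C0)
          then show ?thesis using C0 by simp
        qed
      qed
    qed
  qed
  have hol: "\<Phi> 0 holomorphic_on UNIV"
    using D[of 0] by (auto simp: holomorphic_on_def field_differentiable_def
        intro: has_field_derivative_at_within)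
  define U where "U = complex_of_real ` {t0-\<epsilon><..<t0+\<epsilon>}"
  have U0: "\<Phi> 0 z = 0" if "z \<in> U" for z
    using that zero unfolding U_def \<Phi>_def by auto
  have lim: "complex_of_real t0 islimpt U"
    unfolding islimpt_approachable
  proof (intro allI impI)
    fix e :: real assume e: "e > 0"
    let ?x = "complex_of_real (t0 + min e \<epsilon> / 2)"
    have "t0 + min e \<epsilon> / 2 \<in> {t0-\<epsilon><..<t0+\<epsilon>}" using e eps by auto
    then have "?x \<in> U" unfolding U_def by blast
    moreover have "?x \<noteq> complex_of_real t0" using e eps by simp
    moreover have "dist ?x (complex_of_real t0) < e"
      using e eps by (simp add: dist_norm norm_of_real del: of_real_add flip: of_real_diff)
    ultimately show "\<exists>x'\<in>U. x' \<noteq> complex_of_real t0 \<and> dist x' (complex_of_real t0) < e" by blast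
  qed
  have all0: "\<Phi> 0 w = 0" for w
    by (rule analytic_continuation[OF hol open_UNIV connected_UNIV _ _ lim U0]) auto
  have alln: "\<Phi> n w = 0" for w
  proof (induction n arbitrary: w)
    case 0 then show ?case by (rule all0)
  next
    case (Suc n)
    have "\<Phi> n = (\<lambda>_. 0)" using Suc by auto
    then have "((\<lambda>_. 0) has_field_derivative \<Phi> (Suc n) w) (at w)" using D[of n w] by simp
    moreover have "((\<lambda>_. 0) has_field_derivative 0) (at w)" by simp
    ultimately show ?case using DERIV_unique by blast
  qed
  have "\<Phi> n 0 = (- \<i>) ^ n * (\<integral>y. of_real (a y ^ n) * h y \<partial>M)"
  proof -
    have "\<Phi> n 0 = (\<integral>y. (- \<i>) ^ n * (of_real (a y ^ n) * h y) \<partial>M)"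
      unfolding \<Phi>_def by (intro Bochner_Integration.integral_cong) (auto simp: power_mult_distrib[symmetric])
    then show ?thesis by simp
  qed
  with alln[of 0] show ?thesis by simp
qed

lemma ae_zero_from_boxes_real:
  fixes r :: "'a::euclidean_space \<Rightarrow> real"
  assumes r: "integrable lborel r"
    and box0: "\<And>a b. (\<integral>y. indicator (box a b) y * r y \<partial>lborel) = 0"
  shows "AE y in lborel. r y = 0"
proof -
  let ?p = "\<lambda>y. max 0 (r y)" and ?n = "\<lambda>y. max 0 (- r y)"
  have ip: "integrable lborel ?p" and inn: "integrable lborel ?n" using r by auto
  have rm: "r \<in> borel_measurable lborel" using r by auto
  define M1 where "M1 = density lborel (\<lambda>y. ennreal (?p y))"
  define M2 where "M2 = density lborel (\<lambda>y. ennreal (?n y))"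
  have em1: "emeasure M1 X = ennreal (\<integral>y. ?p y * indicator X y \<partial>lborel)" if "X \<in> sets borel" for X
  proof -
    have "emeasure M1 X = (\<integral>\<^sup>+y. ennreal (?p y) * indicator X y \<partial>lborel)"
      unfolding M1_def using that rm by (simp add: emeasure_density)
    also have "\<dots> = (\<integral>\<^sup>+y. ennreal (?p y * indicator X y) \<partial>lborel)"
      by (intro nn_integral_cong) (auto split: split_indicator)
    also have "\<dots> = ennreal (\<integral>y. ?p y * indicator X y \<partial>lborel)"
      by (intro nn_integral_eq_integral integrable_real_mult_indicator ip) (use that in \<open>auto split: split_indicator\<close>)
    finally show ?thesis .
  qed
  have em2: "emeasure M2 X = ennreal (\<integral>y. ?n y * indicator X y \<partial>lborel)" if "X \<in> sets borel" for X
  proof -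
    have "emeasure M2 X = (\<integral>\<^sup>+y. ennreal (?n y) * indicator X y \<partial>lborel)"
      unfolding M2_def using that rm by (simp add: emeasure_density)
    also have "\<dots> = (\<integral>\<^sup>+y. ennreal (?n y * indicator X y) \<partial>lborel)"
      by (intro nn_integral_cong) (auto split: split_indicator)
    also have "\<dots> = ennreal (\<integral>y. ?n y * indicator X y \<partial>lborel)"
      by (intro nn_integral_eq_integral integrable_real_mult_indicator inn) (use that in \<open>auto split: split_indicator\<close>)
    finally show ?thesis .
  qed
  have "M1 = M2"
  proof (rule measure_eqI_generator_eq)
    let ?E = "range (\<lambda>(a, b). box a b::'a set)"
    show "Int_stable ?E"
      by (auto simp: Int_stable_def box_Int_box)
    show "?E \<subseteq> Pow UNIV" "sets M1 = sigma_sets UNIV ?E" "sets M2 = sigma_sets UNIV ?E"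
      by (simp_all add: M1_def M2_def borel_eq_box)
    let ?A = "\<lambda>n::nat. box (- (real n *\<^sub>R One)) (real n *\<^sub>R One) :: 'a set"
    show "range ?A \<subseteq> ?E" "(\<Union>i. ?A i) = UNIV"
      unfolding UN_box_eq_UNIV by auto
    show "emeasure M1 (?A i) \<noteq> \<infinity>" for i by (simp add: em1)
    show "emeasure M1 X = emeasure M2 X" if "X \<in> ?E" for X
    proof -
      from that obtain a b where X: "X = box a b" by auto
      have "(\<integral>y. ?p y * indicator X y \<partial>lborel) - (\<integral>y. ?n y * indicator X y \<partial>lborel)
          = (\<integral>y. ?p y * indicator X y - ?n y * indicator X y \<partial>lborel)"
        by (rule Bochner_Integration.integral_diff[symmetric])
           (auto intro!: integrable_real_mult_indicator ip inn simp: X)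
      also have "\<dots> = (\<integral>y. indicator X y * r y \<partial>lborel)"
        by (intro Bochner_Integration.integral_cong) (auto split: split_indicator)
      also have "\<dots> = 0" using box0 X by simp
      finally show ?thesis by (simp add: em1 em2 X)
    qed
  qed
  then have "AE y in lborel. ennreal (?p y) = ennreal (?n y)"
    unfolding M1_def M2_def
    by (intro sigma_finite_measure.density_unique[OF sigma_finite_lborel]) (use rm in auto)
  then show ?thesis
    by eventually_elim (auto simp: max_def split: if_splits)
qed

lemma int_bmult:
  fixes f g :: "'a \<Rightarrow> complex"
  assumes f: "integrable M f" and g: "g \<in> borel_measurable M"
    and B: "\<And>y. f y \<noteq> 0 \<Longrightarrow> norm (g y) \<le> B"
  shows "integrable M (\<lambda>y. g y * f y)"
proof (rule Bochner_Integration.integrable_bound[where f="\<lambda>y. B * norm (f y)"])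
  show "integrable M (\<lambda>y. B * norm (f y))" using f by auto
  show "(\<lambda>y. g y * f y) \<in> borel_measurable M" using f g by auto
  show "AE y in M. norm (g y * f y) \<le> norm (B * norm (f y))"
  proof (rule AE_I2)
    fix y show "norm (g y * f y) \<le> norm (B * norm (f y))"
    proof (cases "f y = 0")
      case False
      then have "norm (g y) \<le> \<bar>B\<bar>" using B by force
      then show ?thesis by (simp add: norm_mult abs_mult mult_right_mono)
    qed simp
  qed
qed

lemma cont_zero_to_box:
  fixes f :: "'a::euclidean_space \<Rightarrow> complex"
  assumes f: "integrable lborel f"
    and c0: "\<And>\<phi>. continuous_on UNIV \<phi> \<Longrightarrow> (\<And>y. 0 \<le> \<phi> y \<and> \<phi> y \<le> 1) \<Longrightarrow>
              (\<integral>y. of_real (\<phi> y) * f y \<partial>lborel) = 0"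
  shows "(\<integral>y. of_real (indicator (box a b) y) * f y \<partial>lborel) = 0"
proof -
  define \<phi> where "\<phi> m y = min 1 (real m * infdist y (- box a b))" for m :: nat and y :: 'a
  have cont: "continuous_on UNIV (\<phi> m)" for m
    unfolding \<phi>_def by (intro continuous_intros)
  have rng: "0 \<le> \<phi> m y \<and> \<phi> m y \<le> 1" for m y
    unfolding \<phi>_def by (auto simp: infdist_nonneg)
  have lim: "(\<lambda>m. \<phi> m y) \<longlonglongrightarrow> indicator (box a b) y" for y
  proof (cases "y \<in> box a b")
    case True
    have ne: "- box a b \<noteq> {}"
    proof -
      have "a \<notin> box a b" by (auto simp: mem_box)
      then show ?thesis by blast
    qed
    have d: "infdist y (- box a b) > 0"
      by (rule infdist_pos_not_in_closed) (use True ne in \<open>auto simp: closed_Compl\<close>)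
    obtain N :: nat where N: "real N * infdist y (- box a b) \<ge> 1"
      using reals_Archimedean3[OF d] by (meson less_le)
    have "eventually (\<lambda>m. \<phi> m y = 1) sequentially"
      unfolding eventually_sequentially
    proof (intro exI allI impI)
      fix m assume "m \<ge> N"
      then have "real m * infdist y (- box a b) \<ge> real N * infdist y (- box a b)"
        using d by (intro mult_right_mono) auto
      with N show "\<phi> m y = 1" unfolding \<phi>_def by auto
    qed
    then show ?thesis using True by (simp add: tendsto_eventually)
  next
    case False
    then show ?thesis by (simp add: \<phi>_def)
  qed
  have "(\<lambda>m. \<integral>y. of_real (\<phi> m y) * f y \<partial>lborel) \<longlonglongrightarrow> (\<integral>y. of_real (indicator (box a b) y) * f y \<partial>lborel)"
  proof (rule integral_dominated_convergence[where w="\<lambda>y. norm (f y)"])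
    show "(\<lambda>y. complex_of_real (indicator (box a b) y) * f y) \<in> borel_measurable lborel"
      using f by auto
    show "(\<lambda>y. complex_of_real (\<phi> m y) * f y) \<in> borel_measurable lborel" for m
    proof -
      have "\<phi> m \<in> borel_measurable lborel"
        using cont[of m] by (simp add: borel_measurable_continuous_onI)
      then show ?thesis using f by auto
    qed
    show "integrable lborel (\<lambda>y. norm (f y))" using f by auto
    show "AE y in lborel. (\<lambda>m. complex_of_real (\<phi> m y) * f y) \<longlonglongrightarrow> complex_of_real (indicator (box a b) y) * f y"
      using lim by (auto intro!: tendsto_intros)
    show "AE y in lborel. norm (complex_of_real (\<phi> m y) * f y) \<le> norm (f y)" for m
      using rng[of m] by (auto simp: norm_mult intro!: mult_left_le_one_le)
  qed
  moreover have "(\<integral>y. of_real (\<phi> m y) * f y \<partial>lborel) = 0" for m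
    using c0[OF cont rng] by blast
  ultimately have "(\<lambda>m. 0) \<longlonglongrightarrow> (\<integral>y. of_real (indicator (box a b) y) * f y \<partial>lborel)"
    by simp
  then show ?thesis using LIMSEQ_unique[OF _ tendsto_const] by metis
qed

lemma inner2: "(x::real^2) \<bullet> y = x$1 * y$1 + x$2 * y$2"
  by (simp add: inner_vec_def sum_2)

lemma perp2_1[simp]: "perp2 x $ 1 = - (x $ 2)" and perp2_2[simp]: "perp2 x $ 2 = x $ 1"
  by (simp_all add: perp2_def)

lemma norm2_1: "norm (q::real^2) = 1 \<Longrightarrow> q$1^2 + q$2^2 = 1"
  by (metis inner2 norm_eq_1 power2_eq_square)

lemma norm_perp2: "norm (perp2 q) = norm q"
  by (simp add: norm_eq_sqrt_inner inner2 algebra_simps)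

lemma frame_decomp:
  assumes "norm (q::real^2) = 1"
  shows "y = (q \<bullet> y) *\<^sub>R q + (perp2 q \<bullet> y) *\<^sub>R perp2 q"
proof -
  have n: "q$1^2 + q$2^2 = 1" using norm2_1[OF assms] .
  have e1: "(q$1*y$1 + q$2*y$2)*q$1 + (-(q$2)*y$1 + q$1*y$2)*(-(q$2)) = y$1*(q$1^2+q$2^2)"
    by (simp add: algebra_simps power2_eq_square)
  have e2: "(q$1*y$1 + q$2*y$2)*q$2 + (-(q$2)*y$1 + q$1*y$2)*(q$1) = y$2*(q$1^2+q$2^2)"
    by (simp add: algebra_simps power2_eq_square)
  show ?thesis
    unfolding vec_eq_iff forall_2 inner2 using e1 e2 n by simp
qed

definition msum :: "real^2 \<Rightarrow> (real \<times> nat \<times> nat) list \<Rightarrow> real^2 \<Rightarrow> real" where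
  "msum q L y = (\<Sum>(c,j,k)\<leftarrow>L. c * (q \<bullet> y) ^ j * (perp2 q \<bullet> y) ^ k)"

definition mprod :: "(real \<times> nat \<times> nat) list \<Rightarrow> (real \<times> nat \<times> nat) list \<Rightarrow> (real \<times> nat \<times> nat) list" where
  "mprod L1 L2 = concat (map (\<lambda>(c,j,k). map (\<lambda>(c',j',k'). (c*c', j+j', k+k')) L2) L1)"

lemma msum_Nil[simp]: "msum q [] y = 0" by (simp add: msum_def)
lemma msum_Cons[simp]: "msum q ((c,j,k)#L) y = c * (q \<bullet> y) ^ j * (perp2 q \<bullet> y) ^ k + msum q L y"
  by (simp add: msum_def)
lemma msum_append[simp]: "msum q (L1 @ L2) y = msum q L1 y + msum q L2 y"
  by (simp add: msum_def)

lemma msum_map: "msum q (map (\<lambda>(c',j',k'). (c*c', j+j', k+k')) L2) y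
   = c * (q \<bullet> y) ^ j * (perp2 q \<bullet> y) ^ k * msum q L2 y"
  by (induction L2) (auto simp: algebra_simps power_add)

lemma msum_mprod: "msum q (mprod L1 L2) y = msum q L1 y * msum q L2 y"
  by (induction L1) (auto simp: mprod_def msum_map algebra_simps)

lemma msum_borel: "msum q L \<in> borel_measurable borel"
proof (induction L)
  case Nil
  have "msum q [] = (\<lambda>y. 0)" by (simp add: fun_eq_iff)
  then show ?case by simp
next
  case (Cons x L)
  obtain c j k where x: "x = (c,j,k)" by (cases x) auto
  have "msum q (x # L) = (\<lambda>y. c * (q \<bullet> y) ^ j * (perp2 q \<bullet> y) ^ k + msum q L y)"
    by (simp add: fun_eq_iff x)
  then show ?case using Cons by simp
qed

lemma rpf_repr:
  assumes "real_polynomial_function g" and q: "norm q = 1"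
  shows "\<exists>L. \<forall>y. g y = msum q L y"
  using assms(1)
proof induction
  case (linear f)
  interpret bounded_linear f by fact
  show ?case
  proof (intro exI allI)
    fix y
    have "f y = f ((q \<bullet> y) *\<^sub>R q + (perp2 q \<bullet> y) *\<^sub>R perp2 q)"
      using frame_decomp[OF q] by metis
    also have "\<dots> = (q \<bullet> y) * f q + (perp2 q \<bullet> y) * f (perp2 q)"
      by (simp add: add scale)
    finally show "f y = msum q [(f q, 1, 0), (f (perp2 q), 0, 1)] y" by (simp add: mult.commute)
  qed
next
  case (const c)
  show ?case by (rule exI[of _ "[(c,0,0)]"]) simp
next
  case (add f g)
  then obtain L1 L2 where "\<forall>y. f y = msum q L1 y" "\<forall>y. g y = msum q L2 y" by blast
  then show ?case by (intro exI[of _ "L1 @ L2"]) simp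
next
  case (mult f g)
  then obtain L1 L2 where "\<forall>y. f y = msum q L1 y" "\<forall>y. g y = msum q L2 y" by blast
  then show ?case by (intro exI[of _ "mprod L1 L2"]) (simp add: msum_mprod)
qed

lemma mono_int:
  fixes f :: "real^2 \<Rightarrow> complex"
  assumes f: "integrable lborel f" and q: "norm q = 1" and C: "\<And>y. f y \<noteq> 0 \<Longrightarrow> norm y \<le> C"
  shows "integrable lborel (\<lambda>y. of_real (c * (q \<bullet> y) ^ j * (perp2 q \<bullet> y) ^ k) * f y)"
proof (rule int_bmult[OF f, where B="\<bar>c\<bar> * C ^ j * C ^ k"])
  show "(\<lambda>y. complex_of_real (c * (q \<bullet> y) ^ j * (perp2 q \<bullet> y) ^ k)) \<in> borel_measurable lborel"
    by measurable
  fix y assume "f y \<noteq> 0"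
  then have y: "norm y \<le> C" using C by blast
  have a: "\<bar>q \<bullet> y\<bar> \<le> C" using Cauchy_Schwarz_ineq2[of q y] q y by simp
  have b: "\<bar>perp2 q \<bullet> y\<bar> \<le> C" using Cauchy_Schwarz_ineq2[of "perp2 q" y] q y by (simp add: norm_perp2)
  have "\<bar>c * (q \<bullet> y) ^ j * (perp2 q \<bullet> y) ^ k\<bar> \<le> \<bar>c\<bar> * C ^ j * C ^ k"
    unfolding abs_mult power_abs
  proof -
    have C0: "0 \<le> C" using norm_ge_zero[of y] y by linarith
    show "\<bar>c\<bar> * \<bar>q \<bullet> y\<bar> ^ j * \<bar>perp2 q \<bullet> y\<bar> ^ k \<le> \<bar>c\<bar> * C ^ j * C ^ k"
      using C0 by (intro mult_mono power_mono a b) auto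
  qed
  then show "norm (complex_of_real (c * (q \<bullet> y) ^ j * (perp2 q \<bullet> y) ^ k)) \<le> \<bar>c\<bar> * C ^ j * C ^ k"
    by (simp only: norm_of_real)
qed

lemma msum_int:
  fixes f :: "real^2 \<Rightarrow> complex"
  assumes f: "integrable lborel f" and q: "norm q = 1" and C: "\<And>y. f y \<noteq> 0 \<Longrightarrow> norm y \<le> C"
    and mom: "\<And>j k. (\<integral>y. of_real ((q \<bullet> y) ^ j * (perp2 q \<bullet> y) ^ k) * f y \<partial>lborel) = 0"
  shows "integrable lborel (\<lambda>y. of_real (msum q L y) * f y) \<and> (\<integral>y. of_real (msum q L y) * f y \<partial>lborel) = 0"
proof (induction L)
  case Nil then show ?case by simp
next
  case (Cons x L)
  obtain c j k where x: "x = (c,j,k)" by (cases x) auto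
  have i1: "integrable lborel (\<lambda>y. of_real (c * (q \<bullet> y) ^ j * (perp2 q \<bullet> y) ^ k) * f y)"
    by (rule mono_int[OF f q C])
  have e1: "(\<integral>y. of_real (c * (q \<bullet> y) ^ j * (perp2 q \<bullet> y) ^ k) * f y \<partial>lborel) = 0"
  proof -
    have "(\<integral>y. of_real (c * (q \<bullet> y) ^ j * (perp2 q \<bullet> y) ^ k) * f y \<partial>lborel)
        = (\<integral>y. of_real c * (of_real ((q \<bullet> y) ^ j * (perp2 q \<bullet> y) ^ k) * f y) \<partial>lborel)"
      by (intro Bochner_Integration.integral_cong) auto
    also have "\<dots> = 0" using mom[of j k] by simp
    finally show ?thesis .
  qed
  have eq: "(\<lambda>y. of_real (msum q (x # L) y) * f y) =
     (\<lambda>y. of_real (c * (q \<bullet> y) ^ j * (perp2 q \<bullet> y) ^ k) * f y + of_real (msum q L y) * f y)"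
    by (auto simp: x distrib_right)
  show ?case unfolding eq using i1 e1 Cons by simp
qed

lemma small_zero:
  fixes x N :: real
  assumes "x \<ge> 0" "N \<ge> 0" "\<And>e. e > 0 \<Longrightarrow> x \<le> e * N"
  shows "x = 0"
proof (rule ccontr)
  assume "x \<noteq> 0"
  then have x: "x > 0" using assms by simp
  have "x \<le> (x / (N + 1)) * N" using assms(3)[of "x / (N+1)"] x assms(2) by simp
  also have "\<dots> < x" using x assms(2) by (simp add: field_simps)
  finally show False by simp
qed

lemma cont_from_moments:
  fixes f :: "real^2 \<Rightarrow> complex"
  assumes f: "integrable lborel f" and q: "norm q = 1" and C: "\<And>y. f y \<noteq> 0 \<Longrightarrow> norm y \<le> C"
    and mom: "\<And>j k. (\<integral>y. of_real ((q \<bullet> y) ^ j * (perp2 q \<bullet> y) ^ k) * f y \<partial>lborel) = 0"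
    and \<phi>: "continuous_on UNIV \<phi>"
  shows "(\<integral>y. of_real (\<phi> y) * f y \<partial>lborel) = 0"
proof -
  let ?K = "cball (0::real^2) C"
  have "compact (\<phi> ` ?K)" by (intro compact_continuous_image continuous_on_subset[OF \<phi>]) auto
  then obtain B where B: "\<And>y. y \<in> ?K \<Longrightarrow> norm (\<phi> y) \<le> B"
    by (meson compact_imp_bounded bounded_iff imageI)
  have \<phi>m: "\<phi> \<in> borel_measurable lborel" using \<phi> by (simp add: borel_measurable_continuous_onI)
  have i\<phi>: "integrable lborel (\<lambda>y. of_real (\<phi> y) * f y)"
    by (rule int_bmult[OF f, where B=B]) (use \<phi>m B C in auto)
  let ?I = "\<integral>y. of_real (\<phi> y) * f y \<partial>lborel"
  let ?N = "\<integral>y. norm (f y) \<partial>lborel"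
  have "norm ?I \<le> e * ?N" if e: "e > 0" for e
  proof -
    obtain g where g: "real_polynomial_function g" and ge: "\<And>y. y \<in> ?K \<Longrightarrow> \<bar>\<phi> y - g y\<bar> < e"
      using Stone_Weierstrass_real_polynomial_function[of ?K \<phi> e] \<phi> e
      by (metis compact_cball continuous_on_subset top_greatest)
    obtain L where L: "\<And>y. g y = msum q L y" using rpf_repr[OF g q] by blast
    have ig: "integrable lborel (\<lambda>y. of_real (g y) * f y)" and zg: "(\<integral>y. of_real (g y) * f y \<partial>lborel) = 0"
      using msum_int[OF f q C mom, of L] by (simp_all add: L)
    have gm: "g \<in> borel_measurable lborel"
      unfolding L[abs_def] using msum_borel by simp
    have idiff: "integrable lborel (\<lambda>y. of_real (\<phi> y - g y) * f y)"
      by (rule int_bmult[OF f, where B=e]) (use \<phi>m gm ge C in \<open>auto simp: less_imp_le simp del: of_real_diff\<close>)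
    have "?I = (\<integral>y. of_real (\<phi> y - g y) * f y + of_real (g y) * f y \<partial>lborel)"
      by (intro Bochner_Integration.integral_cong) (auto simp: algebra_simps)
    also have "\<dots> = (\<integral>y. of_real (\<phi> y - g y) * f y \<partial>lborel)"
      using idiff ig zg by simp
    finally have "norm ?I = norm (\<integral>y. of_real (\<phi> y - g y) * f y \<partial>lborel)" by simp
    also have "\<dots> \<le> (\<integral>y. norm (of_real (\<phi> y - g y) * f y) \<partial>lborel)"
      by (rule integral_norm_bound)
    also have "\<dots> \<le> (\<integral>y. e * norm (f y) \<partial>lborel)"
    proof (rule integral_mono)
      show "integrable lborel (\<lambda>y. norm (complex_of_real (\<phi> y - g y) * f y))" using idiff by auto
      show "integrable lborel (\<lambda>y. e * norm (f y))" using f by auto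
      fix y show "norm (complex_of_real (\<phi> y - g y) * f y) \<le> e * norm (f y)"
      proof (cases "f y = 0")
        case False
        then have "y \<in> ?K" using C by auto
        then show ?thesis using ge[of y] by (simp add: norm_mult mult_right_mono del: of_real_diff)
      qed simp
    qed
    also have "\<dots> = e * ?N" by simp
    finally show ?thesis .
  qed
  then have "norm ?I = 0"
    by (intro small_zero[where N="?N"]) (auto intro: integral_nonneg_AE)
  then show ?thesis by simp
qed

lemma ae_zero_from_moments:
  fixes f :: "real^2 \<Rightarrow> complex"
  assumes f: "integrable lborel f" and q: "norm q = 1" and C: "\<And>y. f y \<noteq> 0 \<Longrightarrow> norm y \<le> C"
    and mom: "\<And>j k. (\<integral>y. of_real ((q \<bullet> y) ^ j * (perp2 q \<bullet> y) ^ k) * f y \<partial>lborel) = 0"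
  shows "AE y in lborel. f y = 0"
proof -
  have bx: "(\<integral>y. of_real (indicator (box a b) y) * f y \<partial>lborel) = 0" for a b
    by (rule cont_zero_to_box[OF f]) (rule cont_from_moments[OF f q C mom])
  have ib: "integrable lborel (\<lambda>y. of_real (indicator (box a b) y) * f y)" for a b
    by (rule int_bmult[OF f, where B=1]) (auto simp: indicator_def)
  have "AE y in lborel. Re (f y) = 0"
  proof (rule ae_zero_from_boxes_real)
    show "integrable lborel (\<lambda>y. Re (f y))" using f by auto
    fix a b :: "real^2"
    have "(\<integral>y. indicator (box a b) y * Re (f y) \<partial>lborel) = (\<integral>y. Re (of_real (indicator (box a b) y) * f y) \<partial>lborel)"
      by (intro Bochner_Integration.integral_cong) auto
    also have "\<dots> = 0" using integral_Re[OF ib[of a b]] bx[of a b] by simp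
    finally show "(\<integral>y. indicator (box a b) y * Re (f y) \<partial>lborel) = 0" .
  qed
  moreover have "AE y in lborel. Im (f y) = 0"
  proof (rule ae_zero_from_boxes_real)
    show "integrable lborel (\<lambda>y. Im (f y))" using f by auto
    fix a b :: "real^2"
    have "(\<integral>y. indicator (box a b) y * Im (f y) \<partial>lborel) = (\<integral>y. Im (of_real (indicator (box a b) y) * f y) \<partial>lborel)"
      by (intro Bochner_Integration.integral_cong) auto
    also have "\<dots> = 0" using integral_Im[OF ib[of a b]] bx[of a b] by simp
    finally show "(\<integral>y. indicator (box a b) y * Im (f y) \<partial>lborel) = 0" .
  qed
  ultimately show ?thesis by eventually_elim (simp add: complex_eq_iff)
qed

lemma re_eq_from_mod:
  fixes u v B :: complex
  assumes "cmod u = cmod v" "cmod (u + B) = cmod (v + B)"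
  shows "Re u * Re B + Im u * Im B = Re v * Re B + Im v * Im B"
proof -
  have "cmod u ^ 2 = cmod v ^ 2" "cmod (u + B) ^ 2 = cmod (v + B) ^ 2" using assms by simp_all
  then have "Re u ^ 2 + Im u ^ 2 = Re v ^ 2 + Im v ^ 2"
      "(Re u + Re B) ^ 2 + (Im u + Im B) ^ 2 = (Re v + Re B) ^ 2 + (Im v + Im B) ^ 2"
    by (simp_all add: cmod_power2)
  then show ?thesis by (simp add: power2_eq_square algebra_simps)
qed

lemma phase_recover:
  fixes u v A :: complex and \<theta> :: real
  assumes m0: "cmod u = cmod v" and m1: "cmod (u + A) = cmod (v + A)"
    and m2: "cmod (u + A * cis \<theta>) = cmod (v + A * cis \<theta>)"
    and A: "A \<noteq> 0" and s: "sin \<theta> \<noteq> 0"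
  shows "u = v"
proof -
  define X where "X = Re u - Re v"
  define Y where "Y = Im u - Im v"
  define p where "p = Re A"
  define r where "r = Im A"
  have e1: "X * p + Y * r = 0"
    using re_eq_from_mod[OF m0 m1] unfolding X_def Y_def p_def r_def by (simp add: algebra_simps)
  have e2: "X * (p * cos \<theta> - r * sin \<theta>) + Y * (p * sin \<theta> + r * cos \<theta>) = 0"
    using re_eq_from_mod[OF m0 m2] unfolding X_def Y_def p_def r_def by (simp add: algebra_simps)
  have "cos \<theta> * (X * p + Y * r) - (X * (p * cos \<theta> - r * sin \<theta>) + Y * (p * sin \<theta> + r * cos \<theta>))
      = sin \<theta> * (X * r - Y * p)" by (simp add: algebra_simps)
  then have "sin \<theta> * (X * r - Y * p) = 0" using e1 e2 by simp
  then have e3: "X * r = Y * p" using s by simp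
  have pr: "p * p + r * r \<noteq> 0"
  proof
    assume "p * p + r * r = 0"
    then have "p = 0 \<and> r = 0" by (simp add: sum_squares_eq_zero_iff)
    then show False using A unfolding p_def r_def by (simp add: complex_eq_iff)
  qed
  have "X * (p * p + r * r) = p * (X * p + Y * r) + r * (X * r - Y * p)" by (simp add: algebra_simps)
  then have "X * (p * p + r * r) = 0" using e1 e3 by simp
  then have X0: "X = 0" using pr by (metis mult_eq_0_iff)
  have "Y * (p * p + r * r) = r * (X * p + Y * r) - p * (X * r - Y * p)" by (simp add: algebra_simps)
  then have "Y * (p * p + r * r) = 0" using e1 e3 by simp
  then have Y0: "Y = 0" using pr by (metis mult_eq_0_iff)
  show ?thesis using X0 Y0 unfolding X_def Y_def by (simp add: complex_eq_iff)
qed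

lemma good_point:
  fixes a b c :: real
  assumes ab: "a < b" and c: "c \<noteq> 0"
  shows "\<exists>t. a < t \<and> t < b \<and> sin (t * c) \<noteq> 0"
proof (cases "sin ((a+b)/2 * c) = 0")
  case False
  then show ?thesis using ab by (intro exI[of _ "(a+b)/2"]) auto
next
  case True
  let ?m = "(a+b)/2"
  define h where "h = min ((b - a)/4) (pi / (2 * \<bar>c\<bar>))"
  have h0: "h > 0" using ab c by (simp add: h_def)
  have hb: "h \<le> (b-a)/4" unfolding h_def by (rule min.cobounded1)
  have hc: "h * \<bar>c\<bar> \<le> pi / 2"
  proof -
    have "h \<le> pi / (2 * \<bar>c\<bar>)" unfolding h_def by (rule min.cobounded2)
    then have "h * \<bar>c\<bar> \<le> pi / (2 * \<bar>c\<bar>) * \<bar>c\<bar>" by (rule mult_right_mono) auto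
    also have "\<dots> = pi / 2" using c by simp
    finally show ?thesis .
  qed
  have cosm: "cos (?m * c) \<noteq> 0" using True sin_cos_squared_add[of "?m * c"] by auto
  have shc: "sin (h * c) \<noteq> 0"
  proof (cases "c > 0")
    case True
    have "h * c \<le> pi / 2" using hc True by (simp add: abs_of_pos)
    moreover have "0 < pi" by (rule pi_gt_zero)
    ultimately have "h * c < pi" by linarith
    moreover have "0 < h * c" using h0 True by simp
    ultimately have "0 < h * c" "h * c < pi" by auto
    then show ?thesis using sin_gt_zero by force
  next
    case False
    then have cn: "c < 0" using c by simp
    have "h * (- c) \<le> pi / 2" using hc cn by (simp add: abs_of_neg)
    moreover have "0 < pi" by (rule pi_gt_zero)
    ultimately have "h * (- c) < pi" by linarith
    moreover have "0 < h * (- c)" using h0 cn by (intro mult_pos_pos) auto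
    ultimately have "0 < h * (- c)" "h * (- c) < pi" by auto
    then have "sin (h * (- c)) > 0" using sin_gt_zero by blast
    then show ?thesis by simp
  qed
  have "sin ((?m + h) * c) = cos (?m * c) * sin (h * c)"
    using True by (simp add: distrib_right sin_add)
  then have "sin ((?m + h) * c) \<noteq> 0" using cosm shc by simp
  moreover have "a < ?m + h" "?m + h < b" using h0 hb assms(1) by (simp_all add: field_simps)
  ultimately show ?thesis by blast
qed

lemma good_interval:
  fixes a b c :: real
  assumes ab: "a < b" and c: "c \<noteq> 0"
  shows "\<exists>t0 \<epsilon>. \<epsilon> > 0 \<and> (\<forall>t \<in> {t0-\<epsilon><..<t0+\<epsilon>}. a < t \<and> t < b \<and> sin (t * c) \<noteq> 0)"
proof -
  obtain t1 where t1: "a < t1" "t1 < b" "sin (t1 * c) \<noteq> 0" using good_point[OF ab c] by blast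
  let ?S = "{a<..<b} \<inter> {t. sin (t * c) \<noteq> 0}"
  have "open ?S"
    by (intro open_Int open_greaterThanLessThan open_Collect_neq continuous_intros)
  moreover have "t1 \<in> ?S" using t1 by auto
  ultimately obtain \<epsilon> where e: "\<epsilon> > 0" "ball t1 \<epsilon> \<subseteq> ?S" by (meson openE)
  have "\<forall>t \<in> {t1-\<epsilon><..<t1+\<epsilon>}. a < t \<and> t < b \<and> sin (t * c) \<noteq> 0"
  proof
    fix t assume "t \<in> {t1-\<epsilon><..<t1+\<epsilon>}"
    then have "t \<in> ball t1 \<epsilon>" by (auto simp: dist_real_def)
    then show "a < t \<and> t < b \<and> sin (t * c) \<noteq> 0" using e by auto
  qed
  then show ?thesis using e by blast
qed

lemma cdot_diff: "cdot e (v - w) = cdot e v - cdot e w"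
  by (simp add: cdot_def algebra_simps)
lemma cdot_add_left: "cdot (a + b) v = cdot a v + cdot b v"
  by (simp add: cdot_def algebra_simps)
lemma cdot_scale_left: "cdot (s *\<^sub>R a) v = of_real s * cdot a v"
  by (simp add: cdot_def algebra_simps)
lemma cdot_minus_left: "cdot (- a) v = - cdot a v"
  by (simp add: cdot_def algebra_simps)
lemma cdot_zero_right[simp]: "cdot e 0 = 0"
  by (simp add: cdot_def)

lemma cdot_int:
  fixes F :: "real^2 \<Rightarrow> complex^2"
  assumes "\<And>j. integrable lborel (\<lambda>y. F y $ j)"
  shows "integrable lborel (\<lambda>y. cdot e (F y))"
  unfolding cdot_def using assms by (intro Bochner_Integration.integrable_add integrable_mult_right)

lemma cdot_meas:
  fixes F :: "real^2 \<Rightarrow> complex^2"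
  assumes "\<And>j. integrable lborel (\<lambda>y. F y $ j)"
  shows "(\<lambda>y. cdot e (F y)) \<in> borel_measurable lborel"
  using cdot_int[OF assms] by auto

lemma cis_meas[measurable]:
  fixes f :: "'a \<Rightarrow> real"
  assumes [measurable]: "f \<in> borel_measurable M"
  shows "(\<lambda>y. cis (f y)) \<in> borel_measurable M"
  unfolding cis_conv_exp by measurable

lemma stepB:
  fixes F G :: "real^2 \<Rightarrow> complex^2"
  assumes Fi: "\<And>j. integrable lborel (\<lambda>y. F y $ j)" and Gi: "\<And>j. integrable lborel (\<lambda>y. G y $ j)"
    and Csup: "\<And>y. F y \<noteq> G y \<Longrightarrow> norm y \<le> C" and C0: "C \<ge> 0"
    and x: "norm x = 1" and ab: "a < b" and c: "c \<noteq> 0"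
    and eq: "\<And>t. a < t \<Longrightarrow> t < b \<Longrightarrow> sin (t * c) \<noteq> 0 \<Longrightarrow>
      (\<integral>y. cis (- t * (x \<bullet> y)) * cdot e (F y) \<partial>lborel) = (\<integral>y. cis (- t * (x \<bullet> y)) * cdot e (G y) \<partial>lborel)"
  shows "(\<integral>y. of_real ((x \<bullet> y) ^ n) * cdot e (F y - G y) \<partial>lborel) = 0"
proof -
  obtain t0 \<epsilon> where e: "\<epsilon> > 0" and int: "\<And>t. t \<in> {t0-\<epsilon><..<t0+\<epsilon>} \<Longrightarrow> a < t \<and> t < b \<and> sin (t * c) \<noteq> 0"
    using good_interval[OF ab c] by blast
  have hi: "integrable lborel (\<lambda>y. cdot e (F y - G y))"
    unfolding cdot_diff using cdot_int[OF Fi] cdot_int[OF Gi] by auto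
  show ?thesis
  proof (rule moments_from_interval[OF hi _ C0 _ e])
    show "(\<lambda>y. x \<bullet> y) \<in> borel_measurable lborel" by measurable
    show "\<bar>x \<bullet> y\<bar> \<le> C" if "cdot e (F y - G y) \<noteq> 0" for y
    proof -
      have "F y \<noteq> G y" using that by auto
      then have "norm y \<le> C" by (rule Csup)
      then show ?thesis using Cauchy_Schwarz_ineq2[of x y] x by simp
    qed
    fix t assume t: "t \<in> {t0-\<epsilon><..<t0+\<epsilon>}"
    have ciF: "integrable lborel (\<lambda>y. cis (- t * (x \<bullet> y)) * cdot e (F y))"
      by (rule int_bmult[OF cdot_int[OF Fi], where B=1]) auto
    have ciG: "integrable lborel (\<lambda>y. cis (- t * (x \<bullet> y)) * cdot e (G y))"
      by (rule int_bmult[OF cdot_int[OF Gi], where B=1]) auto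
    have "(\<integral>y. exp (- \<i> * of_real t * of_real (x \<bullet> y)) * cdot e (F y - G y) \<partial>lborel)
        = (\<integral>y. cis (- t * (x \<bullet> y)) * cdot e (F y) - cis (- t * (x \<bullet> y)) * cdot e (G y) \<partial>lborel)"
      by (intro Bochner_Integration.integral_cong) (auto simp: cis_conv_exp cdot_diff algebra_simps)
    also have "\<dots> = (\<integral>y. cis (- t * (x \<bullet> y)) * cdot e (F y) \<partial>lborel) - (\<integral>y. cis (- t * (x \<bullet> y)) * cdot e (G y) \<partial>lborel)"
      by (rule Bochner_Integration.integral_diff[OF ciF ciG])
    also have "\<dots> = 0" using eq int[OF t] by simp
    finally show "(\<integral>y. exp (- \<i> * of_real t * of_real (x \<bullet> y)) * cdot e (F y - G y) \<partial>lborel) = 0" .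
  qed
qed

lemma poly_vanish:
  fixes A B :: "nat \<Rightarrow> complex" and S :: "real set"
  assumes S: "infinite S" and z: "\<And>s. s \<in> S \<Longrightarrow> (\<Sum>k\<le>n. of_real s ^ k * (A k + of_real s * B k)) = 0"
  shows "(\<Sum>k\<le>n. of_real s ^ k * (A k + of_real s * B k)) = 0"
proof -
  define p where "p = (\<Sum>k\<le>n. monom (A k) k + monom (B k) (Suc k))"
  have pe: "poly p z = (\<Sum>k\<le>n. z ^ k * (A k + z * B k))" for z
    unfolding p_def by (simp add: poly_sum poly_monom algebra_simps)
  have "complex_of_real ` S \<subseteq> {z. poly p z = 0}" using z pe by auto
  moreover have "infinite (complex_of_real ` S)"
    using S finite_imageD inj_of_real inj_on_subset by blast
  ultimately have "infinite {z. poly p z = 0}" using finite_subset by blast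
  then have "p = 0" using poly_roots_finite by blast
  then show ?thesis using pe[of "of_real s"] by simp
qed

lemma coeffs_zero:
  fixes A :: "nat \<Rightarrow> complex"
  assumes z: "\<And>s::real. (\<Sum>k\<le>n. of_real s ^ k * A k) = 0" and k: "k \<le> n"
  shows "A k = 0"
proof -
  define p where "p = (\<Sum>k\<le>n. monom (A k) k)"
  have pe: "poly p z = (\<Sum>k\<le>n. z ^ k * A k)" for z
    unfolding p_def by (simp add: poly_sum poly_monom algebra_simps)
  have "range complex_of_real \<subseteq> {z. poly p z = 0}" using z pe by auto
  moreover have "infinite (range complex_of_real)"
    using finite_imageD inj_of_real infinite_UNIV_char_0 by blast
  ultimately have "infinite {z. poly p z = 0}" using finite_subset by blast
  then have "p = 0" using poly_roots_finite by blast
  then have "coeff p k = 0" by simp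
  moreover have "coeff p k = A k"
    unfolding p_def using k by (simp add: coeff_sum coeff_monom)
  ultimately show ?thesis by simp
qed

definition Mom :: "real^2 \<Rightarrow> (real^2 \<Rightarrow> complex) \<Rightarrow> nat \<Rightarrow> nat \<Rightarrow> complex" where
  "Mom q f j k = (\<integral>y. of_real ((q \<bullet> y) ^ j * (perp2 q \<bullet> y) ^ k) * f y \<partial>lborel)"

lemma expand_mom:
  fixes f1 f2 :: "real^2 \<Rightarrow> complex"
  assumes f1: "integrable lborel f1" and f2: "integrable lborel f2" and q: "norm q = 1"
    and C1: "\<And>y. f1 y \<noteq> 0 \<Longrightarrow> norm y \<le> C" and C2: "\<And>y. f2 y \<noteq> 0 \<Longrightarrow> norm y \<le> C"
  shows "(\<integral>y. of_real ((q \<bullet> y + s * (perp2 q \<bullet> y)) ^ n) * (f1 y + of_real s * f2 y) \<partial>lborel)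
    = (\<Sum>k\<le>n. of_real s ^ k * (of_nat (n choose k) * Mom q f1 (n-k) k + of_real s * (of_nat (n choose k) * Mom q f2 (n-k) k)))"
proof -
  let ?T1 = "\<lambda>k y. of_real s ^ k * of_nat (n choose k) * (of_real ((q \<bullet> y) ^ (n-k) * (perp2 q \<bullet> y) ^ k) * f1 y)"
  let ?T2 = "\<lambda>k y. of_real s ^ k * of_real s * of_nat (n choose k) * (of_real ((q \<bullet> y) ^ (n-k) * (perp2 q \<bullet> y) ^ k) * f2 y)"
  have i1: "integrable lborel (\<lambda>y. of_real ((q \<bullet> y) ^ j * (perp2 q \<bullet> y) ^ k) * f1 y)" for j k
    using mono_int[OF f1 q C1, of 1 j k] by simp
  have i2: "integrable lborel (\<lambda>y. of_real ((q \<bullet> y) ^ j * (perp2 q \<bullet> y) ^ k) * f2 y)" for j k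
    using mono_int[OF f2 q C2, of 1 j k] by simp
  have it1: "integrable lborel (?T1 k)" for k
    by (rule integrable_mult_right) (rule i1)
  have it2: "integrable lborel (?T2 k)" for k
    by (rule integrable_mult_right) (rule i2)
  have pw: "of_real ((q \<bullet> y + s * (perp2 q \<bullet> y)) ^ n) * (f1 y + of_real s * f2 y)
      = (\<Sum>k\<le>n. ?T1 k y + ?T2 k y)" for y
  proof -
    have "complex_of_real ((q \<bullet> y + s * (perp2 q \<bullet> y)) ^ n)
        = (of_real s * of_real (perp2 q \<bullet> y) + of_real (q \<bullet> y)) ^ n"
      by (simp add: add.commute)
    also have "\<dots> = (\<Sum>k\<le>n. of_nat (n choose k) * (of_real s * of_real (perp2 q \<bullet> y)) ^ k * of_real (q \<bullet> y) ^ (n - k))"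
      by (rule binomial_ring)
    finally have b: "complex_of_real ((q \<bullet> y + s * (perp2 q \<bullet> y)) ^ n) =
       (\<Sum>k\<le>n. of_nat (n choose k) * (of_real s * of_real (perp2 q \<bullet> y)) ^ k * of_real (q \<bullet> y) ^ (n - k))" .
    show ?thesis unfolding b sum_distrib_right
      by (rule sum.cong) (simp_all add: algebra_simps power_mult_distrib)
  qed
  have "(\<integral>y. of_real ((q \<bullet> y + s * (perp2 q \<bullet> y)) ^ n) * (f1 y + of_real s * f2 y) \<partial>lborel)
      = (\<integral>y. (\<Sum>k\<le>n. ?T1 k y + ?T2 k y) \<partial>lborel)"
    by (simp only: pw)
  also have "\<dots> = (\<Sum>k\<le>n. (\<integral>y. ?T1 k y + ?T2 k y \<partial>lborel))"
    by (rule Bochner_Integration.integral_sum) (intro Bochner_Integration.integrable_add it1 it2)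
  also have "\<dots> = (\<Sum>k\<le>n. of_real s ^ k * (of_nat (n choose k) * Mom q f1 (n-k) k + of_real s * (of_nat (n choose k) * Mom q f2 (n-k) k)))"
  proof (rule sum.cong[OF refl])
    fix k
    have "(\<integral>y. ?T1 k y + ?T2 k y \<partial>lborel) = (\<integral>y. ?T1 k y \<partial>lborel) + (\<integral>y. ?T2 k y \<partial>lborel)"
      by (rule Bochner_Integration.integral_add[OF it1 it2])
    also have "\<dots> = of_real s ^ k * of_nat (n choose k) * Mom q f1 (n-k) k + of_real s ^ k * of_real s * of_nat (n choose k) * Mom q f2 (n-k) k"
      unfolding Mom_def by (simp add: mult.assoc)
    finally show "(\<integral>y. ?T1 k y + ?T2 k y \<partial>lborel) = of_real s ^ k * (of_nat (n choose k) * Mom q f1 (n-k) k + of_real s * (of_nat (n choose k) * Mom q f2 (n-k) k))"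
      by (simp add: algebra_simps)
  qed
  finally show ?thesis .
qed

lemma L2_int:
  fixes F :: "real^2 \<Rightarrow> complex^2"
  assumes L: "L2_source_in \<Omega> F" and o: "open \<Omega>" and b: "bounded \<Omega>"
  shows "integrable lborel (\<lambda>y. F y $ j)"
proof (rule Bochner_Integration.integrable_bound[where f="\<lambda>y. indicator \<Omega> y + (norm (F y $ j))^2"])
  have "integrable lborel (indicator \<Omega> :: real^2 \<Rightarrow> real)"
    using o emeasure_bounded_finite[OF b] by (intro integrable_real_indicator) auto
  then show "integrable lborel (\<lambda>y. indicator \<Omega> y + (norm (F y $ j))^2)"
    using L unfolding L2_source_in_def by (intro Bochner_Integration.integrable_add) auto
  show "(\<lambda>y. F y $ j) \<in> borel_measurable lborel" using L unfolding L2_source_in_def by auto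
  show "AE y in lborel. norm (F y $ j) \<le> norm (indicator \<Omega> y + (norm (F y $ j))^2)"
  proof (rule AE_I2)
    fix y show "norm (F y $ j) \<le> norm (indicator \<Omega> y + (norm (F y $ j))^2)"
    proof (cases "y \<in> \<Omega>")
      case True
      have "norm (F y $ j) \<le> 1 + (norm (F y $ j))^2"
      proof -
        have "0 \<le> (norm (F y $ j) - 1)^2" by simp
        then have "0 \<le> (norm (F y $ j))^2 - 2 * norm (F y $ j) + 1" by (simp add: power2_diff)
        moreover have "0 \<le> (norm (F y $ j))^2" by simp
        ultimately show ?thesis by linarith
      qed
      then show ?thesis using True by simp
    next
      case False
      then have "F y = 0" using L unfolding L2_source_in_def by auto
      then show ?thesis by simp
    qed
  qed
qed

lemma perp2_add: "perp2 (a + b) = perp2 a + perp2 b"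
  by (simp add: vec_eq_iff forall_2)
lemma perp2_scale: "perp2 (r *\<^sub>R a) = r *\<^sub>R perp2 a"
  by (simp add: vec_eq_iff forall_2)
lemma perp2_perp2: "perp2 (perp2 a) = - a"
  by (simp add: vec_eq_iff forall_2)
lemma perp2_inner_self: "a \<bullet> perp2 a = 0"
  by (simp add: inner2)
lemma perp2_inner_perp2: "perp2 a \<bullet> perp2 b = a \<bullet> b"
  by (simp add: inner2 algebra_simps)

lemma scale_mom:
  assumes r: "r > 0"
  shows "(\<integral>y. of_real (((r *\<^sub>R u) \<bullet> y) ^ n) * cdot (r *\<^sub>R e) (h y) \<partial>lborel)
    = of_real (r ^ Suc n) * (\<integral>y. of_real ((u \<bullet> y) ^ n) * cdot e (h y) \<partial>lborel)"
proof -
  have "(\<integral>y. of_real (((r *\<^sub>R u) \<bullet> y) ^ n) * cdot (r *\<^sub>R e) (h y) \<partial>lborel)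
     = (\<integral>y. of_real (r ^ Suc n) * (of_real ((u \<bullet> y) ^ n) * cdot e (h y)) \<partial>lborel)"
    by (intro Bochner_Integration.integral_cong) (auto simp: cdot_scale_left power_mult_distrib algebra_simps)
  then show ?thesis by simp
qed

lemma cdot_recover:
  assumes q: "norm (q::real^2) = 1" and "cdot q w = 0" "cdot (perp2 q) w = 0"
  shows "w = 0"
proof -
  have n: "q$1^2 + q$2^2 = 1" using norm2_1[OF q] .
  have e1: "of_real (q$1) * (of_real (q$1) * w$1 + of_real (q$2) * w$2) - of_real (q$2) * (of_real (- q$2) * w$1 + of_real (q$1) * w$2)
     = of_real (q$1^2 + q$2^2) * w$1"
    by (simp add: algebra_simps power2_eq_square)
  have e2: "of_real (q$2) * (of_real (q$1) * w$1 + of_real (q$2) * w$2) + of_real (q$1) * (of_real (- q$2) * w$1 + of_real (q$1) * w$2)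
     = of_real (q$1^2 + q$2^2) * w$2"
    by (simp add: algebra_simps power2_eq_square)
  have c1: "of_real (q$1) * w$1 + of_real (q$2) * w$2 = 0"
    using assms(2) unfolding cdot_def .
  have c2: "of_real (- q$2) * w$1 + of_real (q$1) * w$2 = 0"
    using assms(3) unfolding cdot_def perp2_1 perp2_2 .
  have "of_real (q$1^2 + q$2^2) * w$1 = 0" using e1 unfolding c1 c2 by simp
  moreover have "of_real (q$1^2 + q$2^2) * w$2 = 0" using e2 unfolding c1 c2 by simp
  ultimately have "w$1 = 0" "w$2 = 0" using n by simp_all
  then show ?thesis by (simp add: vec_eq_iff forall_2)
qed

lemma claimP:
  fixes F G :: "real^2 \<Rightarrow> complex^2"
  assumes Fi: "\<And>j. integrable lborel (\<lambda>y. F y $ j)" and Gi: "\<And>j. integrable lborel (\<lambda>y. G y $ j)"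
    and Csup: "\<And>y. F y \<noteq> G y \<Longrightarrow> norm y \<le> C" and C0: "C \<ge> 0"
    and \<tau>1: "\<tau>1 \<noteq> 0" and w0: "0 < \<omega>min" and w1: "\<omega>min < \<omega>max" and lm: "2 * mu + lam > 0"
    and data: "\<forall>xh \<in> S_q q. \<forall>\<omega> \<in> {\<omega>min<..<\<omega>max}. \<forall>\<tau> \<in> {0, \<tau>1}. \<forall>z \<in> {z0, z1}.
           cmod (farfield_pt_p lam mu F z xh q \<omega> \<tau>) = cmod (farfield_pt_p lam mu G z xh q \<omega> \<tau>)"
    and x: "x \<in> S_q q" and xd: "x \<bullet> (z0 - z1) \<noteq> 0"
  shows "(\<integral>y. of_real ((x \<bullet> y) ^ n) * cdot x (F y - G y) \<partial>lborel) = 0"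
proof -
  have xn: "norm x = 1" and qx: "q \<bullet> x \<ge> 1/2" using x by (auto simp: S_q_def unit_circle_def)
  define \<sigma> where "\<sigma> = sqrt (lam + 2 * mu)"
  have \<sigma>: "\<sigma> > 0" unfolding \<sigma>_def using lm by (simp add: add.commute)
  show ?thesis
  proof (rule stepB[OF Fi Gi Csup C0 xn, where a="\<omega>min / \<sigma>" and b="\<omega>max / \<sigma>" and c="x \<bullet> (z0 - z1)"])
    show "\<omega>min / \<sigma> < \<omega>max / \<sigma>" using w1 \<sigma> by (simp add: divide_strict_right_mono)
    show "x \<bullet> (z0 - z1) \<noteq> 0" by (rule xd)
    fix t assume t1: "\<omega>min / \<sigma> < t" and t2: "t < \<omega>max / \<sigma>" and st: "sin (t * (x \<bullet> (z0 - z1))) \<noteq> 0"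
    define \<omega> where "\<omega> = t * \<sigma>"
    have \<omega>: "\<omega> \<in> {\<omega>min<..<\<omega>max}" using t1 t2 \<sigma> unfolding \<omega>_def by (auto simp: field_simps)
    have k: "k_p lam mu \<omega> = t" unfolding k_p_def \<omega>_def using \<sigma> by (simp add: \<sigma>_def)
    let ?u = "farfield_p lam mu F x \<omega>" and ?v = "farfield_p lam mu G x \<omega>"
    define A where "A = \<tau>1 * cis (- t * (x \<bullet> z0)) * of_real (q \<bullet> x)"
    have D: "\<And>\<tau> z. \<tau> \<in> {0,\<tau>1} \<Longrightarrow> z \<in> {z0,z1} \<Longrightarrow> cmod (farfield_pt_p lam mu F z x q \<omega> \<tau>) = cmod (farfield_pt_p lam mu G z x q \<omega> \<tau>)"
      using data x \<omega> by blast
    have m0: "cmod ?u = cmod ?v"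
      using D[of 0 z0] unfolding farfield_pt_p_def by simp
    have m1: "cmod (?u + A) = cmod (?v + A)"
      using D[of \<tau>1 z0] unfolding farfield_pt_p_def A_def k by simp
    have "A * cis (t * (x \<bullet> (z0 - z1))) = \<tau>1 * cis (- t * (x \<bullet> z1)) * of_real (q \<bullet> x)"
      unfolding A_def by (simp add: cis_mult inner_diff_right algebra_simps)
    moreover have "cmod (?u + \<tau>1 * cis (- t * (x \<bullet> z1)) * of_real (q \<bullet> x)) = cmod (?v + \<tau>1 * cis (- t * (x \<bullet> z1)) * of_real (q \<bullet> x))"
      using D[of \<tau>1 z1] unfolding farfield_pt_p_def k by simp
    ultimately have m2: "cmod (?u + A * cis (t * (x \<bullet> (z0 - z1)))) = cmod (?v + A * cis (t * (x \<bullet> (z0 - z1))))"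
      by simp
    have A0: "A \<noteq> 0" unfolding A_def using \<tau>1 qx by auto
    have "?u = ?v" by (rule phase_recover[OF m0 m1 m2 A0 st])
    then show "(\<integral>y. cis (- t * (x \<bullet> y)) * cdot x (F y) \<partial>lborel) = (\<integral>y. cis (- t * (x \<bullet> y)) * cdot x (G y) \<partial>lborel)"
      unfolding farfield_p_def k .
  qed
qed

lemma claimS:
  fixes F G :: "real^2 \<Rightarrow> complex^2"
  assumes Fi: "\<And>j. integrable lborel (\<lambda>y. F y $ j)" and Gi: "\<And>j. integrable lborel (\<lambda>y. G y $ j)"
    and Csup: "\<And>y. F y \<noteq> G y \<Longrightarrow> norm y \<le> C" and C0: "C \<ge> 0"
    and \<tau>1: "\<tau>1 \<noteq> 0" and w0: "0 < \<omega>min" and w1: "\<omega>min < \<omega>max" and mu: "mu > 0"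
    and data: "\<forall>xh \<in> S_q_perp q. \<forall>\<omega> \<in> {\<omega>min<..<\<omega>max}. \<forall>\<tau> \<in> {0, \<tau>1}. \<forall>z \<in> {z0, z1}.
           cmod (farfield_pt_s mu F z xh q \<omega> \<tau>) = cmod (farfield_pt_s mu G z xh q \<omega> \<tau>)"
    and x: "x \<in> S_q_perp q" and xd: "x \<bullet> (z0 - z1) \<noteq> 0"
  shows "(\<integral>y. of_real ((x \<bullet> y) ^ n) * cdot (perp2 x) (F y - G y) \<partial>lborel) = 0"
proof -
  have xn: "norm x = 1" and qx: "q \<bullet> perp2 x \<ge> 1/2" using x by (auto simp: S_q_perp_def unit_circle_def)
  define \<sigma> where "\<sigma> = sqrt mu"
  have \<sigma>: "\<sigma> > 0" unfolding \<sigma>_def using mu by simp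
  show ?thesis
  proof (rule stepB[OF Fi Gi Csup C0 xn, where a="\<omega>min / \<sigma>" and b="\<omega>max / \<sigma>" and c="x \<bullet> (z0 - z1)"])
    show "\<omega>min / \<sigma> < \<omega>max / \<sigma>" using w1 \<sigma> by (simp add: divide_strict_right_mono)
    show "x \<bullet> (z0 - z1) \<noteq> 0" by (rule xd)
    fix t assume t1: "\<omega>min / \<sigma> < t" and t2: "t < \<omega>max / \<sigma>" and st: "sin (t * (x \<bullet> (z0 - z1))) \<noteq> 0"
    define \<omega> where "\<omega> = t * \<sigma>"
    have \<omega>: "\<omega> \<in> {\<omega>min<..<\<omega>max}" using t1 t2 \<sigma> unfolding \<omega>_def by (auto simp: field_simps)
    have k: "k_s mu \<omega> = t" unfolding k_s_def \<omega>_def using \<sigma> by (simp add: \<sigma>_def)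
    let ?u = "farfield_s mu F x \<omega>" and ?v = "farfield_s mu G x \<omega>"
    define A where "A = \<tau>1 * cis (- t * (x \<bullet> z0)) * of_real (q \<bullet> perp2 x)"
    have D: "\<And>\<tau> z. \<tau> \<in> {0,\<tau>1} \<Longrightarrow> z \<in> {z0,z1} \<Longrightarrow> cmod (farfield_pt_s mu F z x q \<omega> \<tau>) = cmod (farfield_pt_s mu G z x q \<omega> \<tau>)"
      using data x \<omega> by blast
    have m0: "cmod ?u = cmod ?v"
      using D[of 0 z0] unfolding farfield_pt_s_def by simp
    have m1: "cmod (?u + A) = cmod (?v + A)"
      using D[of \<tau>1 z0] unfolding farfield_pt_s_def A_def k by simp
    have "A * cis (t * (x \<bullet> (z0 - z1))) = \<tau>1 * cis (- t * (x \<bullet> z1)) * of_real (q \<bullet> perp2 x)"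
      unfolding A_def by (simp add: cis_mult inner_diff_right algebra_simps)
    moreover have "cmod (?u + \<tau>1 * cis (- t * (x \<bullet> z1)) * of_real (q \<bullet> perp2 x)) = cmod (?v + \<tau>1 * cis (- t * (x \<bullet> z1)) * of_real (q \<bullet> perp2 x))"
      using D[of \<tau>1 z1] unfolding farfield_pt_s_def k by simp
    ultimately have m2: "cmod (?u + A * cis (t * (x \<bullet> (z0 - z1)))) = cmod (?v + A * cis (t * (x \<bullet> (z0 - z1))))"
      by simp
    have A0: "A \<noteq> 0" unfolding A_def using \<tau>1 qx by auto
    have "?u = ?v" by (rule phase_recover[OF m0 m1 m2 A0 st])
    then show "(\<integral>y. cis (- t * (x \<bullet> y)) * cdot (perp2 x) (F y) \<partial>lborel) = (\<integral>y. cis (- t * (x \<bullet> y)) * cdot (perp2 x) (G y) \<partial>lborel)"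
      unfolding farfield_s_def k .
  qed
qed

theorem theorem3p2:
  fixes lam mu \<omega>min \<omega>max :: real
    and \<Omega> :: "(real^2) set"
    and F G :: "real^2 \<Rightarrow> complex^2"
    and \<tau>1 :: complex
    and z0 z1 q :: "real^2"
  assumes "0 < \<omega>min" and "\<omega>min < \<omega>max"
    and "mu > 0" and "2 * mu + lam > 0"
    and "bounded_domain \<Omega>"
    and "L2_source_in \<Omega> F" and "L2_source_in \<Omega> G"
    and "\<tau>1 \<noteq> 0"
    and "z0 \<noteq> z1" and "z0 \<notin> closure \<Omega>" and "z1 \<notin> closure \<Omega>"
    and "q \<in> unit_circle"
    and "\<forall>xh \<in> S_q q. \<forall>\<omega> \<in> {\<omega>min<..<\<omega>max}. \<forall>\<tau> \<in> {0, \<tau>1}. \<forall>z \<in> {z0, z1}.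
           cmod (farfield_pt_p lam mu F z xh q \<omega> \<tau>) = cmod (farfield_pt_p lam mu G z xh q \<omega> \<tau>)"
    and "\<forall>xh \<in> S_q_perp q. \<forall>\<omega> \<in> {\<omega>min<..<\<omega>max}. \<forall>\<tau> \<in> {0, \<tau>1}. \<forall>z \<in> {z0, z1}.
           cmod (farfield_pt_s mu F z xh q \<omega> \<tau>) = cmod (farfield_pt_s mu G z xh q \<omega> \<tau>)"
  shows "AE y in lborel. F y = G y"
proof -
  have \<Omega>o: "open \<Omega>" and \<Omega>b: "bounded \<Omega>" using assms(5) unfolding bounded_domain_def by auto
  obtain C where C0: "C > 0" and C\<Omega>: "\<And>y. y \<in> \<Omega> \<Longrightarrow> norm y \<le> C" using \<Omega>b unfolding bounded_pos by blast
  have Fi: "\<And>j. integrable lborel (\<lambda>y. F y $ j)" by (rule L2_int[OF assms(6) \<Omega>o \<Omega>b])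
  have Gi: "\<And>j. integrable lborel (\<lambda>y. G y $ j)" by (rule L2_int[OF assms(7) \<Omega>o \<Omega>b])
  have Fz: "\<And>y. y \<notin> \<Omega> \<Longrightarrow> F y = 0" using assms(6) unfolding L2_source_in_def by auto
  have Gz: "\<And>y. y \<notin> \<Omega> \<Longrightarrow> G y = 0" using assms(7) unfolding L2_source_in_def by auto
  have Csup: "\<And>y. F y \<noteq> G y \<Longrightarrow> norm y \<le> C" using Fz Gz C\<Omega> by metis
  have qn: "norm q = 1" using assms(12) unfolding unit_circle_def by simp
  have qq: "q \<bullet> q = 1" using qn by (simp add: norm_eq_1)
  define d where "d = z0 - z1"
  have d0: "d \<noteq> 0" using assms(9) by (simp add: d_def)
  define D where "D y = F y - G y" for y
  define Dq where "Dq y = cdot q (D y)" for y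
  define Dp where "Dp y = cdot (perp2 q) (D y)" for y
  have Di: "\<And>j. integrable lborel (\<lambda>y. D y $ j)" unfolding D_def using Fi Gi by auto
  have Dqi: "integrable lborel Dq" unfolding Dq_def by (rule cdot_int[OF Di])
  have Dpi: "integrable lborel Dp" unfolding Dp_def by (rule cdot_int[OF Di])
  have DqC: "\<And>y. Dq y \<noteq> 0 \<Longrightarrow> norm y \<le> C" unfolding Dq_def D_def using Csup by force
  have DpC: "\<And>y. Dp y \<noteq> 0 \<Longrightarrow> norm y \<le> C" unfolding Dp_def D_def using Csup by force
  have mDqC: "\<And>y. - Dq y \<noteq> 0 \<Longrightarrow> norm y \<le> C" using DqC by simp
  define v where "v s = q + s *\<^sub>R perp2 q" for s :: real
  have vinner: "v s \<bullet> y = q \<bullet> y + s * (perp2 q \<bullet> y)" for s y by (simp add: v_def inner_add_left)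
  have cv: "cdot (v s) w = cdot q w + of_real s * cdot (perp2 q) w" for s w
    by (simp add: v_def cdot_add_left cdot_scale_left)
  have pv: "perp2 (v s) = perp2 q + (- s) *\<^sub>R q" for s
    by (simp add: v_def perp2_add perp2_scale perp2_perp2)
  have cpv: "cdot (perp2 (v s)) w = cdot (perp2 q) w + of_real s * (- cdot q w)" for s w
    by (simp add: pv cdot_def algebra_simps)
  have nv: "norm (v s) = sqrt (1 + s^2)" for s
  proof -
    have "v s \<bullet> v s = 1 + s^2"
      by (simp add: v_def inner_add_left inner_add_right perp2_inner_self perp2_inner_perp2 qq
          inner_commute[of "perp2 q" q] power2_eq_square)
    then show ?thesis by (simp add: norm_eq_sqrt_inner)
  qed
  have vpos: "norm (v s) > 0" for s unfolding nv by (simp add: add_pos_nonneg)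
  define xs where "xs s = (1 / norm (v s)) *\<^sub>R v s" for s
  have vx: "v s = norm (v s) *\<^sub>R xs s" for s using vpos[of s] by (simp add: xs_def)
  have xsn: "norm (xs s) = 1" for s using vpos[of s] by (simp add: xs_def)
  have qv: "q \<bullet> v s = 1" for s by (simp add: v_def inner_add_right perp2_inner_self qq)
  have qpv: "q \<bullet> perp2 (v s) = - s" for s by (simp add: pv inner_diff_right perp2_inner_self qq)
  have xsq: "xs s \<in> S_q q" if "\<bar>s\<bar> \<le> 1" for s
  proof -
    have "s^2 \<le> 1" using abs_le_square_iff[of s 1] that by simp
    then have "sqrt (1 + s^2) \<le> sqrt 4" by (intro real_sqrt_le_mono) simp
    then have "norm (v s) \<le> 2" unfolding nv by simp
    then have "1/2 \<le> 1 / norm (v s)" using vpos[of s] by (simp add: field_simps)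
    then show ?thesis using xsn[of s] qv[of s] by (simp add: S_q_def unit_circle_def xs_def)
  qed
  have xsp: "xs s \<in> S_q_perp q" if "s \<le> -1" for s
  proof -
    have "1 * 1 \<le> (- s) * (- s)" using that by (intro mult_mono) auto
    then have "1 + s^2 \<le> (2 * (- s))^2" by (simp add: power2_eq_square)
    then have "sqrt (1 + s^2) \<le> sqrt ((2 * (- s))^2)" by (intro real_sqrt_le_mono)
    moreover have "sqrt ((2 * (- s))^2) = 2 * (- s)" using that by (subst real_sqrt_abs) simp
    ultimately have "norm (v s) \<le> 2 * (- s)" unfolding nv by linarith
    then have "1/2 \<le> - s / norm (v s)" using vpos[of s] by (simp add: field_simps)
    moreover have "q \<bullet> perp2 (xs s) = - s / norm (v s)"
      by (simp add: xs_def perp2_scale qpv)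
    ultimately show ?thesis using xsn[of s] by (simp add: S_q_perp_def unit_circle_def)
  qed
  have xsd: "xs s \<bullet> d \<noteq> 0" if "v s \<bullet> d \<noteq> 0" for s
    using that vpos[of s] by (simp add: xs_def)
  have Pz: "(\<integral>y. of_real ((v s \<bullet> y) ^ n) * cdot (v s) (D y) \<partial>lborel) = 0"
    if "\<bar>s\<bar> \<le> 1" "v s \<bullet> d \<noteq> 0" for s n
  proof -
    have "(\<integral>y. of_real ((v s \<bullet> y) ^ n) * cdot (v s) (D y) \<partial>lborel)
      = of_real (norm (v s) ^ Suc n) * (\<integral>y. of_real ((xs s \<bullet> y) ^ n) * cdot (xs s) (D y) \<partial>lborel)"
      using scale_mom[OF vpos[of s], of "xs s" n "xs s" D] vx[of s] by simp
    also have "(\<integral>y. of_real ((xs s \<bullet> y) ^ n) * cdot (xs s) (D y) \<partial>lborel) = 0"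
      unfolding D_def
      by (rule claimP[OF Fi Gi Csup _ assms(8) assms(1) assms(2) assms(4) assms(13) xsq[OF that(1)]])
         (use C0 xsd[OF that(2)] d_def in auto)
    finally show ?thesis by simp
  qed
  have Qz: "(\<integral>y. of_real ((v s \<bullet> y) ^ n) * cdot (perp2 (v s)) (D y) \<partial>lborel) = 0"
    if "s \<le> -1" "v s \<bullet> d \<noteq> 0" for s n
  proof -
    have pvx: "perp2 (v s) = norm (v s) *\<^sub>R perp2 (xs s)" using vx[of s] perp2_scale by metis
    have "(\<integral>y. of_real ((v s \<bullet> y) ^ n) * cdot (perp2 (v s)) (D y) \<partial>lborel)
      = of_real (norm (v s) ^ Suc n) * (\<integral>y. of_real ((xs s \<bullet> y) ^ n) * cdot (perp2 (xs s)) (D y) \<partial>lborel)"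
      using scale_mom[OF vpos[of s], of "xs s" n "perp2 (xs s)" D] vx[of s] pvx by simp
    also have "(\<integral>y. of_real ((xs s \<bullet> y) ^ n) * cdot (perp2 (xs s)) (D y) \<partial>lborel) = 0"
      unfolding D_def
      by (rule claimS[OF Fi Gi Csup _ assms(8) assms(1) assms(2) assms(3) assms(14) xsp[OF that(1)]])
         (use C0 xsd[OF that(2)] d_def in auto)
    finally show ?thesis by simp
  qed
  define s0 where "s0 = - (q \<bullet> d) / (perp2 q \<bullet> d)"
  have bad: "s = s0" if "v s \<bullet> d = 0" for s
  proof (cases "perp2 q \<bullet> d = 0")
    case True
    then have "q \<bullet> d = 0" using that True by (simp add: vinner)
    then have "d = 0" using frame_decomp[OF qn, of d] True by simp
    then show ?thesis using d0 by simp
  next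
    case False
    have "q \<bullet> d + s * (perp2 q \<bullet> d) = 0" using that by (simp add: vinner)
    then show ?thesis using False unfolding s0_def by (simp add: field_simps)
  qed
  have SPi: "infinite ({-1..1} - {s0})" by (simp add: Diff_infinite_finite)
  have SSi: "infinite ({-2..-1} - {s0})" by (simp add: Diff_infinite_finite)
  have momzero: "Mom q Dq (n - k) k = 0 \<and> Mom q Dp (n - k) k = 0" if k: "k \<le> n" for n k
  proof -
    define A where "A k = of_nat (n choose k) * Mom q Dq (n - k) k" for k
    define B where "B k = of_nat (n choose k) * Mom q Dp (n - k) k" for k
    have MomM: "Mom q (\<lambda>y. - Dq y) j k = - Mom q Dq j k" for j k
      unfolding Mom_def by simp
    have PA: "(\<Sum>k\<le>n. of_real s ^ k * (A k + of_real s * B k)) = 0" for s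
    proof (rule poly_vanish[OF SPi])
      fix s assume s: "s \<in> {-1..1} - {s0}"
      have "(\<Sum>k\<le>n. of_real s ^ k * (A k + of_real s * B k))
          = (\<integral>y. of_real ((q \<bullet> y + s * (perp2 q \<bullet> y)) ^ n) * (Dq y + of_real s * Dp y) \<partial>lborel)"
        unfolding A_def B_def by (rule expand_mom[OF Dqi Dpi qn DqC DpC, symmetric])
      also have "\<dots> = (\<integral>y. of_real ((v s \<bullet> y) ^ n) * cdot (v s) (D y) \<partial>lborel)"
        unfolding vinner cv Dq_def Dp_def ..
      also have "\<dots> = 0" using s bad by (intro Pz) auto
      finally show "(\<Sum>k\<le>n. of_real s ^ k * (A k + of_real s * B k)) = 0" .
    qed
    have QB: "(\<Sum>k\<le>n. of_real s ^ k * (B k + of_real s * (- A k))) = 0" for s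
    proof (rule poly_vanish[OF SSi])
      fix s assume s: "s \<in> {-2..-1} - {s0}"
      have "(\<Sum>k\<le>n. of_real s ^ k * (B k + of_real s * (- A k)))
          = (\<Sum>k\<le>n. of_real s ^ k * (of_nat (n choose k) * Mom q Dp (n - k) k + of_real s * (of_nat (n choose k) * Mom q (\<lambda>y. - Dq y) (n - k) k)))"
        unfolding A_def B_def MomM by simp
      also have "\<dots> = (\<integral>y. of_real ((q \<bullet> y + s * (perp2 q \<bullet> y)) ^ n) * (Dp y + of_real s * (- Dq y)) \<partial>lborel)"
        by (rule expand_mom[OF Dpi _ qn DpC mDqC, symmetric]) (use Dqi in simp)
      also have "\<dots> = (\<integral>y. of_real ((v s \<bullet> y) ^ n) * cdot (perp2 (v s)) (D y) \<partial>lborel)"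
        unfolding vinner cpv Dq_def Dp_def ..
      also have "\<dots> = 0" using s bad by (intro Qz) auto
      finally show "(\<Sum>k\<le>n. of_real s ^ k * (B k + of_real s * (- A k))) = 0" .
    qed
    have SA: "(\<Sum>k\<le>n. of_real s ^ k * A k) = 0" for s :: real
    proof -
      have "of_real (1 + s^2) * (\<Sum>k\<le>n. of_real s ^ k * A k)
         = (\<Sum>k\<le>n. of_real s ^ k * (A k + of_real s * B k)) - of_real s * (\<Sum>k\<le>n. of_real s ^ k * (B k + of_real s * (- A k)))"
        unfolding sum_distrib_left sum_subtractf[symmetric]
        by (rule sum.cong) (simp_all add: algebra_simps power2_eq_square)
      also have "\<dots> = 0" using PA QB by simp
      finally have "of_real (1 + s^2) * (\<Sum>k\<le>n. of_real s ^ k * A k) = 0" .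
      moreover have "(of_real (1 + s^2) :: complex) \<noteq> 0"
        by (metis add_pos_nonneg of_real_eq_0_iff zero_le_power2 zero_less_one not_less_iff_gr_or_eq)
      ultimately show ?thesis by simp
    qed
    have SB: "(\<Sum>k\<le>n. of_real s ^ k * B k) = 0" for s :: real
    proof -
      have "of_real (1 + s^2) * (\<Sum>k\<le>n. of_real s ^ k * B k)
         = of_real s * (\<Sum>k\<le>n. of_real s ^ k * (A k + of_real s * B k)) + (\<Sum>k\<le>n. of_real s ^ k * (B k + of_real s * (- A k)))"
        unfolding sum_distrib_left sum.distrib[symmetric]
        by (rule sum.cong) (simp_all add: algebra_simps power2_eq_square)
      also have "\<dots> = 0" using PA QB by simp
      finally have "of_real (1 + s^2) * (\<Sum>k\<le>n. of_real s ^ k * B k) = 0" .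
      moreover have "(of_real (1 + s^2) :: complex) \<noteq> 0"
        by (metis add_pos_nonneg of_real_eq_0_iff zero_le_power2 zero_less_one not_less_iff_gr_or_eq)
      ultimately show ?thesis by simp
    qed
    have "A k = 0" by (rule coeffs_zero[OF SA k])
    moreover have "B k = 0" by (rule coeffs_zero[OF SB k])
    moreover have "(of_nat (n choose k) :: complex) \<noteq> 0" using k by simp
    ultimately show ?thesis unfolding A_def B_def by simp
  qed
  have MDq: "(\<integral>y. of_real ((q \<bullet> y) ^ j * (perp2 q \<bullet> y) ^ k) * Dq y \<partial>lborel) = 0" for j k
    using momzero[of k "j + k"] unfolding Mom_def by simp
  have MDp: "(\<integral>y. of_real ((q \<bullet> y) ^ j * (perp2 q \<bullet> y) ^ k) * Dp y \<partial>lborel) = 0" for j k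
    using momzero[of k "j + k"] unfolding Mom_def by simp
  have "AE y in lborel. Dq y = 0" by (rule ae_zero_from_moments[OF Dqi qn DqC MDq])
  moreover have "AE y in lborel. Dp y = 0" by (rule ae_zero_from_moments[OF Dpi qn DpC MDp])
  ultimately show ?thesis
  proof eventually_elim
    case (elim y)
    then have "D y = 0" using cdot_recover[OF qn] unfolding Dq_def Dp_def by blast
    then show ?case unfolding D_def by simp
  qed
qed

end
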